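(* Let $K$ be a field of characteristic $p>0$. Then $\{\partial^{[\alpha]}\mid\alpha\in\mathbb{N}^n\}$ is the only iterative $(-\mathrm{ad}(x_1),\ldots,-\mathrm{ad}(x_n))$-descent in $\mathcal{D}(P_n)$ indexed by $\mathbb{N}^n$.
   Context: $P_n=K[x_1,\ldots,x_n]$, $\partial_i^{[k]}=\partial_i^k/k!$ acting on $P_n$ by $\partial_i^{[k]}(x^m)=\binom{m_i}{k}x^{m-ke_i}$, $\partial^{[\alpha]}=\prod_i\partial_i^{[\alpha_i]}$; $\mathcal{D}(P_n)=\bigoplus_\alpha P_n\partial^{[\alpha]}\subseteq\mathrm{End}_K(P_n)$ is the ring of differential operators; $\mathrm{ad}(a)(b)=ab-ba$. For commuting derivations $\delta=(\delta_1,\ldots,\delta_n)$ of a ring $A$, a family $\{y^{[\alpha]}\mid\alpha\in\mathbb{N}^n\}$ is an iterative $\delta$-descent if $y^{[0]}=1$, $y^{[\alpha]}y^{[\beta]}=\binom{\alpha+\beta}{\beta}y^{[\alpha+\beta]}$ (multi-binomial coefficient $\prod_i\binom{\alpha_i+\beta_i}{\beta_i}$ taken in $\mathbb{F}_p$) and $\delta_1^{\alpha_1}\cdots\delta_n^{\alpha_n}(y^{[\beta]})=y^{[\beta-\alpha]}$ for all $\alpha,\beta\in\mathbb{N}^n$, with $y^{[\gamma]}=0$ for $\gamma\notin\mathbb{N}^n$. *)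

theory Defs
  imports Main "HOL-Library.Poly_Mapping"
begin

text \<open>Monomials/multi-indices in the variables indexed by the finite type 'n
  (so n = CARD('n)) are finitely supported maps from 'n to nat;
  P_n = K[x_1,...,x_n] is the ring of finitely supported maps from monomials to K.\<close>

type_synonym ('n, 'k) pn = "('n \<Rightarrow>\<^sub>0 nat) \<Rightarrow>\<^sub>0 'k"

type_synonym ('n, 'k) op = "('n, 'k) pn \<Rightarrow> ('n, 'k) pn"

definition var :: "'n \<Rightarrow> ('n, 'k::field) pn" where
  "var i = Poly_Mapping.single (Poly_Mapping.single i 1) 1"

definition mle :: "('n \<Rightarrow>\<^sub>0 nat) \<Rightarrow> ('n \<Rightarrow>\<^sub>0 nat) \<Rightarrow> bool" where
  "mle a b \<longleftrightarrow> (\<forall>i. Poly_Mapping.lookup a i \<le> Poly_Mapping.lookup b i)"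

definition mbinom :: "('n::finite \<Rightarrow>\<^sub>0 nat) \<Rightarrow> ('n \<Rightarrow>\<^sub>0 nat) \<Rightarrow> nat" where
  "mbinom a b = (\<Prod>i\<in>UNIV. Poly_Mapping.lookup a i choose Poly_Mapping.lookup b i)"

definition dpow :: "('n::finite \<Rightarrow>\<^sub>0 nat) \<Rightarrow> ('n, 'k::field) op" where
  "dpow \<alpha> f = (\<Sum>m\<in>Poly_Mapping.keys f.
      if mle \<alpha> m then Poly_Mapping.single (m - \<alpha>) (of_nat (mbinom m \<alpha>) * Poly_Mapping.lookup f m) else 0)"

definition Dops :: "('n::finite, 'k::field) op set" where
  "Dops = {T. \<exists>S c. finite S \<and> T = (\<lambda>f. \<Sum>\<alpha>\<in>S. c \<alpha> * dpow \<alpha> f)}"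

definition mad :: "'n \<Rightarrow> ('n, 'k::field) op \<Rightarrow> ('n, 'k) op" where
  "mad i b = (\<lambda>f. b (var i * f) - var i * b f)"

text \<open>delta^alpha = delta_1^alpha_1 o ... o delta_n^alpha_n, the product taken along a fixed
  enumeration of the (finite) index type.\<close>
definition var_list :: "'n::finite list" where
  "var_list = (SOME xs. distinct xs \<and> set xs = UNIV)"

definition mad_pow :: "('n::finite \<Rightarrow>\<^sub>0 nat) \<Rightarrow> ('n, 'k::field) op \<Rightarrow> ('n, 'k) op" where
  "mad_pow \<alpha> = foldr (\<lambda>i g. (mad i ^^ Poly_Mapping.lookup \<alpha> i) \<circ> g) var_list id"

text \<open>y^[beta - alpha], with the convention y^[gamma] = 0 for gamma not in N^n.\<close>
definition yshift :: "(('n \<Rightarrow>\<^sub>0 nat) \<Rightarrow> ('n, 'k::field) op) \<Rightarrow> ('n \<Rightarrow>\<^sub>0 nat) \<Rightarrow> ('n \<Rightarrow>\<^sub>0 nat) \<Rightarrow> ('n, 'k) op" where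
  "yshift y \<beta> \<alpha> = (if mle \<alpha> \<beta> then y (\<beta> - \<alpha>) else (\<lambda>f. 0))"

definition iter_descent :: "(('n::finite \<Rightarrow>\<^sub>0 nat) \<Rightarrow> ('n, 'k::field) op) \<Rightarrow> bool" where
  "iter_descent y \<longleftrightarrow>
     (\<forall>\<alpha>. y \<alpha> \<in> Dops) \<and>
     y 0 = id \<and>
     (\<forall>\<alpha> \<beta>. y \<alpha> \<circ> y \<beta> = (\<lambda>f. of_nat (mbinom (\<alpha> + \<beta>) \<beta>) * y (\<alpha> + \<beta>) f)) \<and>
     (\<forall>\<alpha> \<beta>. mad_pow \<alpha> (y \<beta>) = yshift y \<beta> \<alpha>)"

end

theory Submission
  imports Defs
begin


lemma poly_mapping_monomials:
  fixes f :: "'a \<Rightarrow>\<^sub>0 'b::comm_monoid_add"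
  shows "f = (\<Sum>a\<in>Poly_Mapping.keys f. Poly_Mapping.single a (Poly_Mapping.lookup f a))"
proof (rule poly_mapping_eqI)
  fix k
  show "Poly_Mapping.lookup f k = Poly_Mapping.lookup (\<Sum>a\<in>Poly_Mapping.keys f. Poly_Mapping.single a (Poly_Mapping.lookup f a)) k"
    by (cases "k \<in> Poly_Mapping.keys f")
       (auto simp: lookup_sum lookup_single when_def in_keys_iff)
qed

lemma lookup_mult_single_add:
  fixes f :: "('n \<Rightarrow>\<^sub>0 nat) \<Rightarrow>\<^sub>0 'k::comm_ring_1"
  shows "Poly_Mapping.lookup (Poly_Mapping.single a c * f) (a + q) = c * Poly_Mapping.lookup f q"
proof -
  have "Poly_Mapping.lookup (Poly_Mapping.single a c * f) (a + q)
     = (\<Sum>l. (c when a = l) * (\<Sum>q'. Poly_Mapping.lookup f q' when a + q = l + q'))"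
    by (simp add: lookup_mult lookup_single)
  also have "\<dots> = c * (\<Sum>q'. Poly_Mapping.lookup f q' when a + q = a + q')"
    by (simp add: when_mult)
  also have "\<dots> = c * Poly_Mapping.lookup f q"
    by simp
  finally show ?thesis .
qed

lemma lookup_mult_single_not:
  fixes f :: "('n \<Rightarrow>\<^sub>0 nat) \<Rightarrow>\<^sub>0 'k::comm_ring_1"
  assumes "\<And>q. k \<noteq> a + q"
  shows "Poly_Mapping.lookup (Poly_Mapping.single a c * f) k = 0"
proof -
  have "Poly_Mapping.lookup (Poly_Mapping.single a c * f) k
     = (\<Sum>l. (c when a = l) * (\<Sum>q'. Poly_Mapping.lookup f q' when k = l + q'))"
    by (simp add: lookup_mult lookup_single)
  also have "\<dots> = c * (\<Sum>q'. Poly_Mapping.lookup f q' when k = a + q')"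
    by (simp add: when_mult)
  also have "\<dots> = 0"
    using assms by simp
  finally show ?thesis .
qed

lemma lookup_const_mult:
  fixes f :: "('n \<Rightarrow>\<^sub>0 nat) \<Rightarrow>\<^sub>0 'k::comm_ring_1"
  shows "Poly_Mapping.lookup (Poly_Mapping.single 0 c * f) q = c * Poly_Mapping.lookup f q"
  using lookup_mult_single_add[of 0 c f q] by simp

lemma lookup_of_nat_mult:
  fixes f :: "('n \<Rightarrow>\<^sub>0 nat) \<Rightarrow>\<^sub>0 'k::comm_ring_1"
  shows "Poly_Mapping.lookup (of_nat n * f) q = of_nat n * Poly_Mapping.lookup f q"
  using lookup_const_mult[of "of_nat n" f q] by simp

lemma mle_diff_eq:
  assumes "mle \<alpha> m"
  shows "(m - \<alpha> = k) \<longleftrightarrow> (m = k + \<alpha>)"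
proof
  assume h: "m - \<alpha> = k"
  show "m = k + \<alpha>"
  proof (rule poly_mapping_eqI)
    fix x
    have "Poly_Mapping.lookup \<alpha> x \<le> Poly_Mapping.lookup m x" using assms by (simp add: mle_def)
    moreover have "Poly_Mapping.lookup k x = Poly_Mapping.lookup m x - Poly_Mapping.lookup \<alpha> x"
      using h by (simp add: lookup_minus[symmetric])
    ultimately show "Poly_Mapping.lookup m x = Poly_Mapping.lookup (k + \<alpha>) x"
      by (simp add: lookup_add)
  qed
next
  assume "m = k + \<alpha>"
  then show "m - \<alpha> = k"
    by (simp add: poly_mapping_eq_iff fun_eq_iff lookup_minus lookup_add)
qed

lemma mle_add: "mle \<alpha> (k + \<alpha>)"
  by (simp add: mle_def lookup_add)

lemma lookup_dpow:
  "Poly_Mapping.lookup (dpow \<alpha> f) k = of_nat (mbinom (k + \<alpha>) \<alpha>) * Poly_Mapping.lookup f (k + \<alpha>)"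
proof -
  have "Poly_Mapping.lookup (dpow \<alpha> f) k =
     (\<Sum>m\<in>Poly_Mapping.keys f. if m = k + \<alpha> then of_nat (mbinom m \<alpha>) * Poly_Mapping.lookup f m else 0)"
    unfolding dpow_def lookup_sum
    by (rule sum.cong) (auto simp: lookup_single when_def mle_diff_eq mle_add)
  also have "\<dots> = of_nat (mbinom (k + \<alpha>) \<alpha>) * Poly_Mapping.lookup f (k + \<alpha>)"
    by (cases "k + \<alpha> \<in> Poly_Mapping.keys f") (auto simp: in_keys_iff)
  finally show ?thesis .
qed

lemma dpow_add: "dpow \<alpha> (f + g) = dpow \<alpha> f + dpow \<alpha> g"
  by (rule poly_mapping_eqI) (simp add: lookup_dpow lookup_add algebra_simps)

lemma dpow_diff: "dpow \<alpha> (f - g) = dpow \<alpha> f - dpow \<alpha> g"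
  by (rule poly_mapping_eqI) (simp add: lookup_dpow lookup_minus algebra_simps)

lemma dpow_const: "dpow \<alpha> (Poly_Mapping.single 0 c * f) = Poly_Mapping.single 0 c * dpow \<alpha> f"
  by (rule poly_mapping_eqI) (unfold lookup_dpow lookup_const_mult, simp add: ac_simps)

lemma dpow_zero_fun: "dpow \<alpha> 0 = 0"
  by (rule poly_mapping_eqI) (simp add: lookup_dpow)

lemma mbinom_zero: "mbinom k 0 = 1"
  by (simp add: mbinom_def)

lemma dpow_0: "dpow 0 = id"
  by (rule ext, rule poly_mapping_eqI) (simp add: lookup_dpow mbinom_zero)

lemma dpow_Dops: "dpow \<alpha> \<in> Dops"
proof -
  have "dpow \<alpha> = (\<lambda>f. \<Sum>\<beta>\<in>{\<alpha>}. 1 * dpow \<beta> f)" by simp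
  then show ?thesis unfolding Dops_def
    by (intro CollectI exI[of _ "{\<alpha>}"] exI[of _ "\<lambda>_. 1"] conjI) simp_all
qed

lemma Dops_add:
  assumes "T \<in> Dops" shows "T (f + g) = T f + T g"
proof -
  from assms obtain S c where "T = (\<lambda>f. \<Sum>\<alpha>\<in>S. c \<alpha> * dpow \<alpha> f)" unfolding Dops_def by blast
  then show ?thesis by (simp add: dpow_add distrib_left sum.distrib)
qed

lemma Dops_diff:
  assumes "T \<in> Dops" shows "T (f - g) = T f - T g"
proof -
  from assms obtain S c where "T = (\<lambda>f. \<Sum>\<alpha>\<in>S. c \<alpha> * dpow \<alpha> f)" unfolding Dops_def by blast
  then show ?thesis by (simp add: dpow_diff right_diff_distrib sum_subtractf)
qed

lemma Dops_const:
  assumes "T \<in> Dops" shows "T (Poly_Mapping.single 0 a * f) = Poly_Mapping.single 0 a * T f"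
proof -
  from assms obtain S c where T: "T = (\<lambda>f. \<Sum>\<alpha>\<in>S. c \<alpha> * dpow \<alpha> f)" unfolding Dops_def by blast
  have "T (Poly_Mapping.single 0 a * f) = (\<Sum>\<alpha>\<in>S. c \<alpha> * (Poly_Mapping.single 0 a * dpow \<alpha> f))"
    by (simp add: T dpow_const)
  also have "\<dots> = (\<Sum>\<alpha>\<in>S. Poly_Mapping.single 0 a * (c \<alpha> * dpow \<alpha> f))"
    by (intro sum.cong refl) (rule mult.left_commute)
  also have "\<dots> = Poly_Mapping.single 0 a * T f"
    by (simp add: T sum_distrib_left)
  finally show ?thesis .
qed

lemma Dops_of_nat:
  assumes "T \<in> Dops" shows "T (of_nat n * f) = of_nat n * T f"
  using Dops_const[OF assms, of "of_nat n" f] by simp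


lemma choose_identity:
  "((K + a) choose a) * ((K + a + b) choose b) = ((a + b) choose b) * ((K + a + b) choose (a + b))"
proof -
  have "((K + a + b) choose (a + b)) * ((a + b) choose b) = ((K + a + b) choose b) * ((K + a + b - b) choose (a + b - b))"
    by (rule choose_mult) auto
  then show ?thesis by (simp add: ac_simps)
qed

lemma mbinom_mult:
  "mbinom (k + \<alpha>) \<alpha> * mbinom (k + \<alpha> + \<beta>) \<beta> = mbinom (\<alpha> + \<beta>) \<beta> * mbinom (k + \<alpha> + \<beta>) (\<alpha> + \<beta>)"
  unfolding mbinom_def prod.distrib[symmetric]
  by (rule prod.cong) (simp_all add: lookup_add choose_identity)

lemma dpow_dpow:
  "dpow \<alpha> (dpow \<beta> f) = of_nat (mbinom (\<alpha> + \<beta>) \<beta>) * dpow (\<alpha> + \<beta>) f"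
proof (rule poly_mapping_eqI)
  fix k
  have "Poly_Mapping.lookup (dpow \<alpha> (dpow \<beta> f)) k =
     of_nat (mbinom (k + \<alpha>) \<alpha> * mbinom (k + \<alpha> + \<beta>) \<beta>) * Poly_Mapping.lookup f (k + \<alpha> + \<beta>)"
    by (simp add: lookup_dpow)
  also have "\<dots> = of_nat (mbinom (\<alpha> + \<beta>) \<beta> * mbinom (k + \<alpha> + \<beta>) (\<alpha> + \<beta>)) * Poly_Mapping.lookup f (k + \<alpha> + \<beta>)"
    by (simp only: mbinom_mult)
  also have "\<dots> = Poly_Mapping.lookup (of_nat (mbinom (\<alpha> + \<beta>) \<beta>) * dpow (\<alpha> + \<beta>) f) k"
    by (simp add: lookup_of_nat_mult lookup_dpow add.assoc)
  finally show "Poly_Mapping.lookup (dpow \<alpha> (dpow \<beta> f)) k = Poly_Mapping.lookup (of_nat (mbinom (\<alpha> + \<beta>) \<beta>) * dpow (\<alpha> + \<beta>) f) k" .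
qed

lemma lookup_var_mult:
  fixes f :: "('n \<Rightarrow>\<^sub>0 nat) \<Rightarrow>\<^sub>0 'k::field"
  shows "Poly_Mapping.lookup (var i * f) m =
    (if 1 \<le> Poly_Mapping.lookup m i then Poly_Mapping.lookup f (m - Poly_Mapping.single i 1) else 0)"
proof (cases "1 \<le> Poly_Mapping.lookup m i")
  case True
  then have "m = Poly_Mapping.single i 1 + (m - Poly_Mapping.single i 1)"
    by (auto simp: poly_mapping_eq_iff fun_eq_iff lookup_add lookup_minus lookup_single when_def)
  then have "Poly_Mapping.lookup (var i * f) m = Poly_Mapping.lookup (var i * f) (Poly_Mapping.single i 1 + (m - Poly_Mapping.single i 1))"
    by simp
  also have "\<dots> = Poly_Mapping.lookup f (m - Poly_Mapping.single i 1)"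
    unfolding var_def by (simp only: lookup_mult_single_add) simp
  finally show ?thesis using True by simp
next
  case False
  have "\<And>q. m \<noteq> Poly_Mapping.single i 1 + q"
  proof
    fix q assume "m = Poly_Mapping.single i 1 + q"
    then have "Poly_Mapping.lookup m i = 1 + Poly_Mapping.lookup q i" by (simp add: lookup_add)
    with False show False by simp
  qed
  then show ?thesis using False unfolding var_def by (simp add: lookup_mult_single_not)
qed


lemma mbinom_split:
  "mbinom a c = (Poly_Mapping.lookup a i choose Poly_Mapping.lookup c i) *
     (\<Prod>j\<in>UNIV - {i}. Poly_Mapping.lookup a j choose Poly_Mapping.lookup c j)"
  unfolding mbinom_def by (rule prod.remove) auto

lemma mad_dpow:
  fixes \<beta> :: "'n::finite \<Rightarrow>\<^sub>0 nat"
  shows "mad i (dpow \<beta> :: ('n, 'k::field) op) =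
    (if 1 \<le> Poly_Mapping.lookup \<beta> i then dpow (\<beta> - Poly_Mapping.single i 1) else (\<lambda>f. 0))"
proof (rule ext, rule poly_mapping_eqI)
  fix f :: "('n, 'k) pn" and k :: "'n \<Rightarrow>\<^sub>0 nat"
  define e :: "'n \<Rightarrow>\<^sub>0 nat" where "e = Poly_Mapping.single i 1"
  define K where "K = Poly_Mapping.lookup k i"
  define b where "b = Poly_Mapping.lookup \<beta> i"
  define P where "P = (\<Prod>j\<in>UNIV - {i}. Poly_Mapping.lookup (k + \<beta>) j choose Poly_Mapping.lookup \<beta> j)"
  have le: "\<And>j. Poly_Mapping.lookup e j = (if j = i then 1 else 0)"
    by (simp add: e_def lookup_single when_def)
  have F1: "mbinom (k + \<beta>) \<beta> = ((K + b) choose b) * P"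
    by (simp add: mbinom_split[of _ _ i] P_def K_def b_def lookup_add)
  have F2: "mbinom (k - e + \<beta>) \<beta> = ((K - 1 + b) choose b) * P" if "1 \<le> K"
  proof -
    have "(\<Prod>j\<in>UNIV - {i}. Poly_Mapping.lookup (k - e + \<beta>) j choose Poly_Mapping.lookup \<beta> j) = P"
      unfolding P_def by (rule prod.cong) (auto simp: lookup_add lookup_minus le)
    then show ?thesis by (simp add: mbinom_split[of _ _ i] K_def b_def lookup_add lookup_minus le)
  qed
  have F3: "mbinom (k + (\<beta> - e)) (\<beta> - e) = ((K + b - 1) choose (b - 1)) * P" if "1 \<le> b"
  proof -
    have "(\<Prod>j\<in>UNIV - {i}. Poly_Mapping.lookup (k + (\<beta> - e)) j choose Poly_Mapping.lookup (\<beta> - e) j) = P"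
      unfolding P_def by (rule prod.cong) (auto simp: lookup_add lookup_minus le)
    then show ?thesis using that by (simp add: mbinom_split[of _ _ i] K_def b_def lookup_add lookup_minus le)
  qed
  have E1: "k + \<beta> - e = k + (\<beta> - e)" if "1 \<le> b"
    using that by (auto simp: poly_mapping_eq_iff fun_eq_iff lookup_add lookup_minus le b_def)
  have E2: "k - e + \<beta> = k + \<beta> - e" if "1 \<le> K"
    using that by (auto simp: poly_mapping_eq_iff fun_eq_iff lookup_add lookup_minus le K_def)
  have L: "Poly_Mapping.lookup (mad i (dpow \<beta>) f) k =
     of_nat (mbinom (k + \<beta>) \<beta>) * (if 1 \<le> K + b then Poly_Mapping.lookup f (k + \<beta> - e) else 0)
     - (if 1 \<le> K then of_nat (mbinom (k - e + \<beta>) \<beta>) * Poly_Mapping.lookup f (k - e + \<beta>) else 0)"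
    by (simp add: mad_def lookup_minus lookup_dpow lookup_var_mult e_def K_def b_def lookup_add)
  show "Poly_Mapping.lookup (mad i (dpow \<beta>) f) k =
    Poly_Mapping.lookup ((if 1 \<le> Poly_Mapping.lookup \<beta> i then dpow (\<beta> - Poly_Mapping.single i 1) else (\<lambda>f. 0)) f) k"
  proof (cases "1 \<le> b")
    case True
    have R: "Poly_Mapping.lookup ((if 1 \<le> Poly_Mapping.lookup \<beta> i then dpow (\<beta> - Poly_Mapping.single i 1) else (\<lambda>f. 0)) f) k
       = of_nat (((K + b - 1) choose (b - 1)) * P) * Poly_Mapping.lookup f (k + \<beta> - e)"
    proof -
      have "(if 1 \<le> Poly_Mapping.lookup \<beta> i then dpow (\<beta> - Poly_Mapping.single i 1) else (\<lambda>f. 0)) f = dpow (\<beta> - e) f"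
        using True by (simp add: b_def e_def)
      then show ?thesis by (simp only: lookup_dpow F3[OF True] E1[OF True])
    qed
    show ?thesis
    proof (cases "1 \<le> K")
      case True2: True
      have pas: "(K + b) choose b = ((K + b - 1) choose (b - 1)) + ((K - 1 + b) choose b)"
      proof -
        obtain b' where b': "b = Suc b'" using True by (cases b) auto
        obtain K' where K': "K = Suc K'" using True2 by (cases K) auto
        show ?thesis by (simp add: b' K')
      qed
      have "Poly_Mapping.lookup (mad i (dpow \<beta>) f) k =
         of_nat (((K + b) choose b) * P) * Poly_Mapping.lookup f (k + \<beta> - e)
         - of_nat (((K - 1 + b) choose b) * P) * Poly_Mapping.lookup f (k + \<beta> - e)"
        using True True2 unfolding L F1 F2[OF True2] unfolding E2[OF True2] by simp
      also have "\<dots> = of_nat (((K + b - 1) choose (b - 1)) * P) * Poly_Mapping.lookup f (k + \<beta> - e)"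
        unfolding pas by (simp add: algebra_simps)
      finally show ?thesis using R by simp
    next
      case False
      then have "K = 0" by simp
      then have "Poly_Mapping.lookup (mad i (dpow \<beta>) f) k =
         of_nat (((K + b - 1) choose (b - 1)) * P) * Poly_Mapping.lookup f (k + \<beta> - e)"
        using True unfolding L F1 by simp
      then show ?thesis using R by simp
    qed
  next
    case False
    then have b0: "b = 0" by simp
    have R: "Poly_Mapping.lookup ((if 1 \<le> Poly_Mapping.lookup \<beta> i then dpow (\<beta> - Poly_Mapping.single i 1) else (\<lambda>f. 0)) f) k = 0"
      using b0 by (simp add: b_def)
    show ?thesis
    proof (cases "1 \<le> K")
      case True
      have "Poly_Mapping.lookup (mad i (dpow \<beta>) f) k =
         of_nat (((K + b) choose b) * P) * Poly_Mapping.lookup f (k + \<beta> - e)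
         - of_nat (((K - 1 + b) choose b) * P) * Poly_Mapping.lookup f (k + \<beta> - e)"
        using True unfolding L F1 F2[OF True] unfolding E2[OF True] by simp
      then show ?thesis using b0 R by simp
    next
      case False
      then show ?thesis using b0 unfolding L R by simp
    qed
  qed
qed


lemma mad_zero: "mad i (\<lambda>f. 0) = (\<lambda>f. 0)"
  by (simp add: mad_def)

lemma funpow_mad_zero: "(mad i ^^ n) (\<lambda>f. 0) = (\<lambda>f. 0)"
  by (induction n) (simp_all add: mad_zero)

lemma funpow_mad_dpow:
  fixes \<beta> :: "'n::finite \<Rightarrow>\<^sub>0 nat"
  shows "(mad i ^^ n) (dpow \<beta> :: ('n, 'k::field) op) =
    (if n \<le> Poly_Mapping.lookup \<beta> i then dpow (\<beta> - Poly_Mapping.single i n) else (\<lambda>f. 0))"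
proof (induction n)
  case 0
  have "\<beta> - Poly_Mapping.single i 0 = \<beta>" by simp
  then show ?case by simp
next
  case (Suc n)
  show ?case
  proof (cases "Suc n \<le> Poly_Mapping.lookup \<beta> i")
    case True
    have eq: "\<beta> - Poly_Mapping.single i n - Poly_Mapping.single i (Suc 0) = \<beta> - Poly_Mapping.single i (Suc n)"
      by (auto simp: poly_mapping_eq_iff fun_eq_iff lookup_minus lookup_single when_def)
    have "(mad i ^^ Suc n) (dpow \<beta> :: ('n, 'k) op) = mad i (dpow (\<beta> - Poly_Mapping.single i n))"
      using Suc True by simp
    also have "\<dots> = dpow (\<beta> - Poly_Mapping.single i (Suc n))"
    proof -
      have "Suc 0 \<le> Poly_Mapping.lookup \<beta> i - n" using True by simp
      then show ?thesis by (simp add: mad_dpow lookup_minus eq)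
    qed
    finally show ?thesis using True by simp
  next
    case False
    show ?thesis
    proof (cases "n \<le> Poly_Mapping.lookup \<beta> i")
      case True
      then have "n = Poly_Mapping.lookup \<beta> i" using False by simp
      then have "(mad i ^^ Suc n) (dpow \<beta> :: ('n, 'k) op) = mad i (dpow (\<beta> - Poly_Mapping.single i n))"
        using Suc by simp
      also have "\<dots> = (\<lambda>f. 0)"
        using \<open>n = _\<close> by (simp add: mad_dpow lookup_minus)
      finally show ?thesis using False by simp
    next
      case False2: False
      then show ?thesis using Suc False by (simp add: mad_zero)
    qed
  qed
qed

lemma foldr_mad_dpow:
  fixes \<beta> :: "'n::finite \<Rightarrow>\<^sub>0 nat"
  assumes "distinct xs"
  shows "foldr (\<lambda>i g. (mad i ^^ Poly_Mapping.lookup \<alpha> i) \<circ> g) xs id (dpow \<beta> :: ('n, 'k::field) op) =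
    (if (\<forall>i\<in>set xs. Poly_Mapping.lookup \<alpha> i \<le> Poly_Mapping.lookup \<beta> i)
     then dpow (\<beta> - (\<Sum>i\<in>set xs. Poly_Mapping.single i (Poly_Mapping.lookup \<alpha> i))) else (\<lambda>f. 0))"
  using assms
proof (induction xs)
  case Nil
  then show ?case by simp
next
  case (Cons j xs)
  define \<beta>' where "\<beta>' = \<beta> - (\<Sum>i\<in>set xs. Poly_Mapping.single i (Poly_Mapping.lookup \<alpha> i))"
  have j: "j \<notin> set xs" using Cons by simp
  have lk: "Poly_Mapping.lookup (\<Sum>i\<in>set xs. Poly_Mapping.single i (Poly_Mapping.lookup \<alpha> i)) x =
      (if x \<in> set xs then Poly_Mapping.lookup \<alpha> x else 0)" for x
    by (simp add: lookup_sum lookup_single when_def)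
  have b'j: "Poly_Mapping.lookup \<beta>' j = Poly_Mapping.lookup \<beta> j"
    using j by (simp add: \<beta>'_def lookup_minus lk)
  have eqk: "\<beta>' - Poly_Mapping.single j (Poly_Mapping.lookup \<alpha> j) =
     \<beta> - (\<Sum>i\<in>set (j # xs). Poly_Mapping.single i (Poly_Mapping.lookup \<alpha> i))"
  proof -
    have "(\<Sum>i\<in>set (j # xs). Poly_Mapping.single i (Poly_Mapping.lookup \<alpha> i)) =
      Poly_Mapping.single j (Poly_Mapping.lookup \<alpha> j) + (\<Sum>i\<in>set xs. Poly_Mapping.single i (Poly_Mapping.lookup \<alpha> i))"
      using j by simp
    then show ?thesis
      by (auto simp: \<beta>'_def poly_mapping_eq_iff fun_eq_iff lookup_minus lookup_add lk lookup_single when_def)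
  qed
  have IH: "foldr (\<lambda>i g. (mad i ^^ Poly_Mapping.lookup \<alpha> i) \<circ> g) xs id (dpow \<beta> :: ('n, 'k) op) =
    (if (\<forall>i\<in>set xs. Poly_Mapping.lookup \<alpha> i \<le> Poly_Mapping.lookup \<beta> i) then dpow \<beta>' else (\<lambda>f. 0))"
    unfolding \<beta>'_def by (rule Cons.IH) (use Cons.prems in simp)
  have "foldr (\<lambda>i g. (mad i ^^ Poly_Mapping.lookup \<alpha> i) \<circ> g) (j # xs) id (dpow \<beta> :: ('n, 'k) op) =
     (mad j ^^ Poly_Mapping.lookup \<alpha> j) (foldr (\<lambda>i g. (mad i ^^ Poly_Mapping.lookup \<alpha> i) \<circ> g) xs id (dpow \<beta>))"
    by simp
  also have "\<dots> = (mad j ^^ Poly_Mapping.lookup \<alpha> j)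
     (if (\<forall>i\<in>set xs. Poly_Mapping.lookup \<alpha> i \<le> Poly_Mapping.lookup \<beta> i) then dpow \<beta>' else (\<lambda>f. 0))"
    by (simp only: IH)
  also have "\<dots> = (if (\<forall>i\<in>set (j # xs). Poly_Mapping.lookup \<alpha> i \<le> Poly_Mapping.lookup \<beta> i)
     then dpow (\<beta> - (\<Sum>i\<in>set (j # xs). Poly_Mapping.single i (Poly_Mapping.lookup \<alpha> i))) else (\<lambda>f. 0))"
    by (simp add: funpow_mad_zero funpow_mad_dpow b'j eqk)
  finally show ?case .
qed

lemma var_list_props: "distinct (var_list :: 'n::finite list) \<and> set (var_list :: 'n list) = UNIV"
proof -
  have "\<exists>xs :: 'n list. distinct xs \<and> set xs = UNIV"
    using finite_distinct_list[of "UNIV :: 'n set"] by auto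
  then show ?thesis unfolding var_list_def by (rule someI_ex)
qed

lemma sum_single_UNIV:
  fixes \<alpha> :: "'n::finite \<Rightarrow>\<^sub>0 nat"
  shows "(\<Sum>i\<in>UNIV. Poly_Mapping.single i (Poly_Mapping.lookup \<alpha> i)) = \<alpha>"
  by (rule poly_mapping_eqI) (simp add: lookup_sum lookup_single when_def)

lemma mad_pow_dpow:
  fixes \<beta> :: "'n::finite \<Rightarrow>\<^sub>0 nat"
  shows "mad_pow \<alpha> (dpow \<beta> :: ('n, 'k::field) op) = yshift dpow \<beta> \<alpha>"
  unfolding mad_pow_def yshift_def
  using var_list_props[where 'n='n]
  by (simp add: foldr_mad_dpow sum_single_UNIV mle_def)

lemma existence:
  "iter_descent (dpow :: ('n::finite \<Rightarrow>\<^sub>0 nat) \<Rightarrow> ('n, 'k::field) op)"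
  unfolding iter_descent_def
  by (simp add: dpow_Dops dpow_0 mad_pow_dpow fun_eq_iff dpow_dpow)



primrec horner :: "'n list \<Rightarrow> nat \<Rightarrow> ('n \<Rightarrow>\<^sub>0 nat) \<Rightarrow> nat" where
  "horner [] N m = 0"
| "horner (i # xs) N m = Poly_Mapping.lookup m i + N * horner xs N m"

lemma horner_add: "horner xs N (a + b) = horner xs N a + horner xs N b"
  by (induction xs) (simp_all add: lookup_add algebra_simps)

lemma horner_zero: "horner xs N 0 = 0"
  by (induction xs) simp_all

lemma horner_inj:
  assumes "\<forall>i\<in>set xs. Poly_Mapping.lookup a i < N" "\<forall>i\<in>set xs. Poly_Mapping.lookup b i < N"
    and "horner xs N a = horner xs N b"
  shows "\<forall>i\<in>set xs. Poly_Mapping.lookup a i = Poly_Mapping.lookup b i"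
  using assms
proof (induction xs)
  case Nil
  then show ?case by simp
next
  case (Cons j xs)
  let ?x = "horner xs N a" and ?y = "horner xs N b"
  have ja: "Poly_Mapping.lookup a j < N" and jb: "Poly_Mapping.lookup b j < N" using Cons.prems by auto
  have eq: "Poly_Mapping.lookup a j + N * ?x = Poly_Mapping.lookup b j + N * ?y" using Cons.prems by simp
  have "(Poly_Mapping.lookup a j + N * ?x) mod N = Poly_Mapping.lookup a j" using ja by simp
  moreover have "(Poly_Mapping.lookup b j + N * ?y) mod N = Poly_Mapping.lookup b j" using jb by simp
  ultimately have 1: "Poly_Mapping.lookup a j = Poly_Mapping.lookup b j" using eq by metis
  then have "N * ?x = N * ?y" using eq by simp
  moreover have "N > 0" using ja by simp
  ultimately have "?x = ?y" by simp
  then have "\<forall>i\<in>set xs. Poly_Mapping.lookup a i = Poly_Mapping.lookup b i"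
    using Cons.IH Cons.prems by simp
  then show ?case using 1 by simp
qed

lemma horner_pos:
  assumes "1 \<le> N" "i \<in> set xs" "0 < Poly_Mapping.lookup a i"
  shows "0 < horner xs N a"
  using assms by (induction xs) auto

definition mulk :: "nat \<Rightarrow> ('n \<Rightarrow>\<^sub>0 nat) \<Rightarrow> ('n \<Rightarrow>\<^sub>0 nat)" where
  "mulk k a = (\<Sum>j<k. a)"

lemma mulk_0 [simp]: "mulk 0 a = 0"
  by (simp add: mulk_def)

lemma mulk_Suc: "mulk (Suc k) a = a + mulk k a"
  by (simp add: mulk_def add.commute)

lemma lookup_mulk: "Poly_Mapping.lookup (mulk k a) i = k * Poly_Mapping.lookup a i"
  by (simp add: mulk_def lookup_sum)

lemma horner_mulk: "horner xs N (mulk k a) = k * horner xs N a"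
  by (induction k) (simp_all add: mulk_Suc horner_add horner_zero)

lemma comm_is_mult:
  fixes z :: "('n::finite, 'k::field) op"
  assumes add: "\<And>f g. z (f + g) = z f + z g"
    and const: "\<And>a f. z (Poly_Mapping.single 0 a * f) = Poly_Mapping.single 0 a * z f"
    and comm: "\<And>i f. z (var i * f) = var i * z f"
  shows "z f = z 1 * f"
proof -
  have z0: "z 0 = 0" using add[of 0 0] by simp
  have mono: "z (Poly_Mapping.single m a) = z 1 * Poly_Mapping.single m a" for m a
  proof (induction "sum (Poly_Mapping.lookup m) UNIV" arbitrary: m a rule: less_induct)
    case less
    show ?case
    proof (cases "m = 0")
      case True
      have "z (Poly_Mapping.single 0 a) = z (Poly_Mapping.single 0 a * 1)" by simp
      also have "\<dots> = Poly_Mapping.single 0 a * z 1" by (rule const)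
      finally show ?thesis using True by (simp add: mult.commute)
    next
      case False
      then obtain i where i: "Poly_Mapping.lookup m i \<noteq> 0"
        by (metis lookup_zero poly_mapping_eqI)
      define m' where "m' = m - Poly_Mapping.single i 1"
      have mm: "m = Poly_Mapping.single i 1 + m'"
        using i by (auto simp: m'_def poly_mapping_eq_iff fun_eq_iff lookup_add lookup_minus lookup_single when_def)
      have "sum (Poly_Mapping.lookup m) UNIV = sum (Poly_Mapping.lookup (Poly_Mapping.single i 1)) UNIV + sum (Poly_Mapping.lookup m') UNIV"
        by (subst mm) (simp add: lookup_add sum.distrib)
      moreover have "sum (Poly_Mapping.lookup (Poly_Mapping.single i (1::nat))) UNIV = 1"
        by (simp add: lookup_single when_def)
      ultimately have lt: "sum (Poly_Mapping.lookup m') UNIV < sum (Poly_Mapping.lookup m) UNIV" by simp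
      have sm: "Poly_Mapping.single m a = var i * Poly_Mapping.single m' a"
        unfolding var_def by (simp add: mult_single mm)
      have "z (Poly_Mapping.single m a) = var i * z (Poly_Mapping.single m' a)"
        by (simp add: sm comm)
      also have "\<dots> = var i * (z 1 * Poly_Mapping.single m' a)"
        using less lt by simp
      also have "\<dots> = z 1 * Poly_Mapping.single m a"
        by (simp add: sm ac_simps)
      finally show ?thesis .
    qed
  qed
  have zsum: "z (sum h S) = sum (\<lambda>x. z (h x)) S" if "finite S" for h :: "('n \<Rightarrow>\<^sub>0 nat) \<Rightarrow> ('n, 'k) pn" and S
    using that by (induction S rule: finite_induct) (simp_all add: z0 add)
  have "z f = z (\<Sum>a\<in>Poly_Mapping.keys f. Poly_Mapping.single a (Poly_Mapping.lookup f a))"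
    by (subst poly_mapping_monomials[of f]) simp
  also have "\<dots> = (\<Sum>a\<in>Poly_Mapping.keys f. z 1 * Poly_Mapping.single a (Poly_Mapping.lookup f a))"
    by (simp add: zsum mono)
  also have "\<dots> = z 1 * f"
    by (subst (2) poly_mapping_monomials[of f]) (simp add: sum_distrib_left)
  finally show ?thesis .
qed

lemma weight_nonzero:
  fixes c :: "('n::finite, 'k::field) pn" and \<beta> :: "'n \<Rightarrow>\<^sub>0 nat"
  assumes c0: "c \<noteq> 0" and b0: "\<beta> \<noteq> 0" and T: "\<And>g. T g = dpow \<beta> g + c * g"
  shows "(T ^^ k) 1 \<noteq> 0"
proof -
  define N where "N = Suc (Max ((\<lambda>(m, i). Poly_Mapping.lookup m i) ` (Poly_Mapping.keys c \<times> UNIV)))"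
  have fin: "finite ((\<lambda>(m, i). Poly_Mapping.lookup m i) ` (Poly_Mapping.keys c \<times> (UNIV :: 'n set)))" by simp
  have bnd: "Poly_Mapping.lookup m i < N" if "m \<in> Poly_Mapping.keys c" for m i
  proof -
    have "Poly_Mapping.lookup m i \<le> Max ((\<lambda>(m, i). Poly_Mapping.lookup m i) ` (Poly_Mapping.keys c \<times> UNIV))"
      by (rule Max_ge[OF fin]) (use that in force)
    then show ?thesis by (simp add: N_def)
  qed
  define w where "w = horner (var_list :: 'n list) N"
  have setv: "set (var_list :: 'n list) = UNIV" using var_list_props by blast
  have winj: "a = b" if "a \<in> Poly_Mapping.keys c" "b \<in> Poly_Mapping.keys c" "w a = w b" for a b
  proof (rule poly_mapping_eqI)
    fix i
    have "\<forall>i\<in>set (var_list :: 'n list). Poly_Mapping.lookup a i = Poly_Mapping.lookup b i"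
      by (rule horner_inj) (use that bnd in \<open>auto simp: w_def\<close>)
    then show "Poly_Mapping.lookup a i = Poly_Mapping.lookup b i" using setv by simp
  qed
  have wadd: "w (a + b) = w a + w b" for a b by (simp add: w_def horner_add)
  have wmulk: "w (mulk k a) = k * w a" for k a by (simp add: w_def horner_mulk)
  have wb: "0 < w \<beta>"
  proof -
    obtain i where "Poly_Mapping.lookup \<beta> i \<noteq> 0" using b0 by (metis lookup_zero poly_mapping_eqI)
    then show ?thesis unfolding w_def by (intro horner_pos[of N i]) (auto simp: N_def setv)
  qed
  have kne: "Poly_Mapping.keys c \<noteq> {}" using c0 by simp
  obtain m0 where m0: "m0 \<in> Poly_Mapping.keys c" "w m0 = Max (w ` Poly_Mapping.keys c)"
  proof -
    have "Max (w ` Poly_Mapping.keys c) \<in> w ` Poly_Mapping.keys c"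
      using kne by (intro Max_in) auto
    then show ?thesis using that by (metis (no_types, lifting) imageE)
  qed
  define W where "W = w m0"
  have wle: "w a \<le> W" if "a \<in> Poly_Mapping.keys c" for a
    unfolding W_def m0(2) using that by simp
  have wlt: "w a < W" if "a \<in> Poly_Mapping.keys c" "a \<noteq> m0" for a
    using wle[OF that(1)] winj[OF that(1) m0(1)] that(2) unfolding W_def by fastforce
  define c0v where "c0v = Poly_Mapping.lookup c m0"
  have c0v: "c0v \<noteq> 0" using m0(1) by (simp add: c0v_def in_keys_iff)
  have inv: "(\<forall>m\<in>Poly_Mapping.keys ((T ^^ k) 1). w m \<le> k * W) \<and>
      Poly_Mapping.lookup ((T ^^ k) 1) (mulk k m0) = c0v ^ k" for k
  proof (induction k)
    case 0
    have "Poly_Mapping.keys (1 :: ('n, 'k) pn) = {0}" by simp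
    then show ?case by (simp add: w_def horner_zero lookup_one)
  next
    case (Suc k)
    define g where "g = (T ^^ k) 1"
    have gb: "\<forall>m\<in>Poly_Mapping.keys g. w m \<le> k * W" and gv: "Poly_Mapping.lookup g (mulk k m0) = c0v ^ k"
      using Suc by (simp_all add: g_def)
    have Tg: "(T ^^ Suc k) 1 = dpow \<beta> g + c * g" by (simp add: g_def T)
    have kb1: "w m \<le> Suc k * W" if "m \<in> Poly_Mapping.keys (dpow \<beta> g)" for m
    proof -
      have "Poly_Mapping.lookup g (m + \<beta>) \<noteq> 0" using that by (simp add: in_keys_iff lookup_dpow)
      then have "w (m + \<beta>) \<le> k * W" using gb by (simp add: in_keys_iff)
      then show ?thesis by (simp add: wadd)
    qed
    have kb2: "w m \<le> Suc k * W" if mk: "m \<in> Poly_Mapping.keys (c * g)" for m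
    proof -
      obtain a b where ab: "m = a + b" "a \<in> Poly_Mapping.keys c" "b \<in> Poly_Mapping.keys g"
        using keys_mult[of c g] mk by blast
      have "w b \<le> k * W" using gb ab(3) by blast
      then show ?thesis using wle[OF ab(2)] by (simp add: ab(1) wadd)
    qed
    have part1: "\<forall>m\<in>Poly_Mapping.keys ((T ^^ Suc k) 1). w m \<le> Suc k * W"
      using keys_add[of "dpow \<beta> g" "c * g"] kb1 kb2 unfolding Tg by blast
    define q where "q = mulk (Suc k) m0"
    have wq: "w q = Suc k * W" by (simp add: q_def wmulk W_def)
    have d0: "Poly_Mapping.lookup (dpow \<beta> g) q = 0"
    proof -
      have "w (q + \<beta>) > k * W" using wq wb by (simp add: wadd)
      then have "q + \<beta> \<notin> Poly_Mapping.keys g" using gb by force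
      then have "Poly_Mapping.lookup g (q + \<beta>) = 0" by (simp add: in_keys_iff)
      then show ?thesis by (simp add: lookup_dpow)
    qed
    have other: "Poly_Mapping.lookup (Poly_Mapping.single a (Poly_Mapping.lookup c a) * g) q = 0"
      if "a \<in> Poly_Mapping.keys c" "a \<noteq> m0" for a
    proof (cases "\<exists>q'. q = a + q'")
      case True
      then obtain q' where q': "q = a + q'" by blast
      have "Poly_Mapping.lookup g q' = 0"
      proof (rule ccontr)
        assume "Poly_Mapping.lookup g q' \<noteq> 0"
        then have "w q' \<le> k * W" using gb by (simp add: in_keys_iff)
        moreover have "w a < W" by (rule wlt[OF that])
        ultimately have "w q < Suc k * W" by (simp add: q' wadd)
        then show False using wq by simp
      qed
      then show ?thesis by (simp add: q' lookup_mult_single_add)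
    next
      case False
      then show ?thesis by (intro lookup_mult_single_not) blast
    qed
    have "c * g = (\<Sum>a\<in>Poly_Mapping.keys c. Poly_Mapping.single a (Poly_Mapping.lookup c a) * g)"
      by (subst (1) poly_mapping_monomials[of c]) (simp add: sum_distrib_right)
    then have "Poly_Mapping.lookup (c * g) q =
        (\<Sum>a\<in>Poly_Mapping.keys c. Poly_Mapping.lookup (Poly_Mapping.single a (Poly_Mapping.lookup c a) * g) q)"
      by (simp add: lookup_sum)
    also have "\<dots> = Poly_Mapping.lookup (Poly_Mapping.single m0 (Poly_Mapping.lookup c m0) * g) q"
      by (rule sum.remove[OF _ m0(1), THEN trans]) (simp_all add: other)
    also have "\<dots> = c0v * c0v ^ k"
      by (simp add: q_def mulk_Suc lookup_mult_single_add gv c0v_def)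
    finally have "Poly_Mapping.lookup ((T ^^ Suc k) 1) q = c0v ^ Suc k"
      unfolding Tg by (simp add: lookup_add d0)
    then show ?case using part1 by (simp add: q_def)
  qed
  have "Poly_Mapping.lookup ((T ^^ k) 1) (mulk k m0) \<noteq> 0"
    using inv[of k] c0v by simp
  then show ?thesis by auto
qed


lemma foldr_single:
  assumes "distinct xs"
  shows "foldr (\<lambda>j g. (mad j ^^ Poly_Mapping.lookup (Poly_Mapping.single i (1::nat)) j) \<circ> g) xs id b =
    (if i \<in> set xs then mad i b else b)"
  using assms
proof (induction xs)
  case Nil
  then show ?case by simp
next
  case (Cons j xs)
  have "foldr (\<lambda>j g. (mad j ^^ Poly_Mapping.lookup (Poly_Mapping.single i (1::nat)) j) \<circ> g) (j # xs) id b =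
    (mad j ^^ Poly_Mapping.lookup (Poly_Mapping.single i (1::nat)) j)
      (foldr (\<lambda>j g. (mad j ^^ Poly_Mapping.lookup (Poly_Mapping.single i (1::nat)) j) \<circ> g) xs id b)"
    by simp
  also have "\<dots> = (mad j ^^ Poly_Mapping.lookup (Poly_Mapping.single i (1::nat)) j) (if i \<in> set xs then mad i b else b)"
  proof -
    have IH: "foldr (\<lambda>j g. (mad j ^^ Poly_Mapping.lookup (Poly_Mapping.single i (1::nat)) j) \<circ> g) xs id b =
      (if i \<in> set xs then mad i b else b)"
      by (rule Cons.IH) (use Cons.prems in simp)
    show ?thesis by (simp only: IH)
  qed
  also have "\<dots> = (if i \<in> set (j # xs) then mad i b else b)"
    using Cons.prems by (cases "j = i") (auto simp: lookup_single)
  finally show ?case .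
qed

lemma mad_pow_single: "mad_pow (Poly_Mapping.single i 1) b = mad i (b :: ('n::finite, 'k::field) op)"
  unfolding mad_pow_def by (subst foldr_single) (use var_list_props[where 'n='n] in auto)

lemma mbinom_CHAR_dvd:
  fixes \<beta> :: "'n::finite \<Rightarrow>\<^sub>0 nat"
  assumes "\<beta> \<noteq> 0" "p = Suc k"
  shows "p dvd mbinom (\<beta> + mulk k \<beta>) (mulk k \<beta>)"
proof -
  obtain j where j: "Poly_Mapping.lookup \<beta> j \<noteq> 0" using assms(1) by (metis lookup_zero poly_mapping_eqI)
  define b where "b = Poly_Mapping.lookup \<beta> j"
  have bpos: "0 < b" using j by (simp add: b_def)
  have "(b + k * b) choose (k * b) = (p * b) choose b"
  proof -
    have "(p * b) choose (k * b) = (p * b) choose (p * b - k * b)"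
      by (rule binomial_symmetric) (simp add: assms(2))
    moreover have "p * b - k * b = b" by (simp add: assms(2))
    ultimately show ?thesis by (simp add: assms(2))
  qed
  moreover have "b * ((p * b) choose b) = b * (p * ((p * b - 1) choose (b - 1)))"
    using times_binomial_minus1_eq[OF bpos, of "p * b"] by (simp add: ac_simps)
  then have "(p * b) choose b = p * ((p * b - 1) choose (b - 1))" using bpos by simp
  ultimately have "p dvd ((b + k * b) choose (k * b))" by simp
  then have "p dvd (Poly_Mapping.lookup (\<beta> + mulk k \<beta>) j choose Poly_Mapping.lookup (mulk k \<beta>) j)"
    by (simp add: lookup_add lookup_mulk b_def)
  also have "\<dots> dvd mbinom (\<beta> + mulk k \<beta>) (mulk k \<beta>)"
    unfolding mbinom_def by (rule dvd_prodI) auto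
  finally show ?thesis .
qed

lemma descent_power:
  fixes y :: "('n::finite \<Rightarrow>\<^sub>0 nat) \<Rightarrow> ('n, 'k::field) op"
  assumes "iter_descent y"
  shows "\<exists>N. \<forall>g. (y \<beta> ^^ k) g = of_nat N * y (mulk k \<beta>) g"
proof (induction k)
  case 0
  have "y 0 = id" using assms by (simp add: iter_descent_def)
  then show ?case by (intro exI[of _ 1]) simp
next
  case (Suc k)
  then obtain N where N: "\<And>g. (y \<beta> ^^ k) g = of_nat N * y (mulk k \<beta>) g" by blast
  have D: "y \<beta> \<in> Dops" using assms by (simp add: iter_descent_def)
  have P: "y \<beta> (y (mulk k \<beta>) g) = of_nat (mbinom (\<beta> + mulk k \<beta>) (mulk k \<beta>)) * y (\<beta> + mulk k \<beta>) g" for g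
    using assms unfolding iter_descent_def by (metis comp_apply)
  have "(y \<beta> ^^ Suc k) g = of_nat (N * mbinom (\<beta> + mulk k \<beta>) (mulk k \<beta>)) * y (mulk (Suc k) \<beta>) g" for g
    by (simp add: N Dops_of_nat[OF D] P mulk_Suc)
  then show ?case by blast
qed

lemma descent_power_zero:
  fixes y :: "('n::finite \<Rightarrow>\<^sub>0 nat) \<Rightarrow> ('n, 'k::field) op"
  assumes "iter_descent y" "CHAR('k) > 0" "\<beta> \<noteq> 0"
  shows "(y \<beta> ^^ CHAR('k)) g = 0"
proof -
  obtain k where k: "CHAR('k) = Suc k" using assms(2) by (cases "CHAR('k)") auto
  obtain N where N: "\<And>g. (y \<beta> ^^ k) g = of_nat N * y (mulk k \<beta>) g"
    using descent_power[OF assms(1)] by blast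
  have D: "y \<beta> \<in> Dops" using assms by (simp add: iter_descent_def)
  have P: "y \<beta> (y (mulk k \<beta>) g) = of_nat (mbinom (\<beta> + mulk k \<beta>) (mulk k \<beta>)) * y (\<beta> + mulk k \<beta>) g" for g
    using assms unfolding iter_descent_def by (metis comp_apply)
  have "CHAR('k) dvd mbinom (\<beta> + mulk k \<beta>) (mulk k \<beta>)"
    by (rule mbinom_CHAR_dvd[OF assms(3) k])
  then have "(of_nat (mbinom (\<beta> + mulk k \<beta>) (mulk k \<beta>)) :: 'k) = 0"
    by (simp add: of_nat_eq_0_iff_char_dvd)
  then have Z: "(of_nat (mbinom (\<beta> + mulk k \<beta>) (mulk k \<beta>)) :: ('n, 'k) pn) = 0"
    by (metis single_of_nat single_zero)
  have "(y \<beta> ^^ CHAR('k)) g = y \<beta> ((y \<beta> ^^ k) g)" by (simp add: k)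
  also have "\<dots> = of_nat N * y \<beta> (y (mulk k \<beta>) g)" by (simp add: N Dops_of_nat[OF D])
  also have "\<dots> = 0" by (simp add: P Z)
  finally show ?thesis .
qed


lemma uniqueness:
  fixes y :: "('n::finite \<Rightarrow>\<^sub>0 nat) \<Rightarrow> ('n, 'k::field) op"
  assumes desc: "iter_descent y" and ch: "CHAR('k) > 0"
  shows "y \<beta> = dpow \<beta>"
proof (induction "sum (Poly_Mapping.lookup \<beta>) UNIV" arbitrary: \<beta> rule: less_induct)
  case less
  show ?case
  proof (cases "\<beta> = 0")
    case True
    then show ?thesis using desc by (simp add: iter_descent_def dpow_0)
  next
    case False
    have Dy: "y \<beta> \<in> Dops" using desc by (simp add: iter_descent_def)
    have Dd: "dpow \<beta> \<in> Dops" by (rule dpow_Dops)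
    have md: "mad i (y \<beta>) = mad i (dpow \<beta>)" for i
    proof -
      have "mad i (y \<beta>) = yshift y \<beta> (Poly_Mapping.single i 1)"
        using desc mad_pow_single[of i "y \<beta>"] by (simp add: iter_descent_def)
      moreover have "mad i (dpow \<beta> :: ('n, 'k) op) = yshift dpow \<beta> (Poly_Mapping.single i 1)"
        by (metis mad_pow_dpow mad_pow_single)
      moreover have "y (\<beta> - Poly_Mapping.single i 1) = dpow (\<beta> - Poly_Mapping.single i 1)"
        if "mle (Poly_Mapping.single i 1) \<beta>"
      proof (rule less)
        have i1: "1 \<le> Poly_Mapping.lookup \<beta> i" using that by (auto simp: mle_def dest: spec[of _ i])
        have "sum (Poly_Mapping.lookup \<beta>) UNIV = Poly_Mapping.lookup \<beta> i + sum (Poly_Mapping.lookup \<beta>) (UNIV - {i})"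
          by (rule sum.remove) auto
        moreover have "sum (Poly_Mapping.lookup (\<beta> - Poly_Mapping.single i 1)) UNIV =
          Poly_Mapping.lookup (\<beta> - Poly_Mapping.single i 1) i + sum (Poly_Mapping.lookup (\<beta> - Poly_Mapping.single i 1)) (UNIV - {i})"
          by (rule sum.remove) auto
        moreover have "sum (Poly_Mapping.lookup (\<beta> - Poly_Mapping.single i 1)) (UNIV - {i}) = sum (Poly_Mapping.lookup \<beta>) (UNIV - {i})"
          by (rule sum.cong) (auto simp: lookup_minus lookup_single)
        ultimately show "sum (Poly_Mapping.lookup (\<beta> - Poly_Mapping.single i 1)) UNIV < sum (Poly_Mapping.lookup \<beta>) UNIV"
          using i1 by (simp add: lookup_minus)
      qed
      ultimately show ?thesis by (simp add: yshift_def)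
    qed
    define z where "z = (\<lambda>f. y \<beta> f - dpow \<beta> f)"
    have zadd: "z (f + g) = z f + z g" for f g
      by (simp add: z_def Dops_add[OF Dy] Dops_add[OF Dd])
    have zconst: "z (Poly_Mapping.single 0 a * f) = Poly_Mapping.single 0 a * z f" for a f
      by (simp add: z_def Dops_const[OF Dy] Dops_const[OF Dd] right_diff_distrib)
    have zcomm: "z (var i * f) = var i * z f" for i f
    proof -
      have "y \<beta> (var i * f) - var i * y \<beta> f = dpow \<beta> (var i * f) - var i * dpow \<beta> f"
        using fun_cong[OF md[of i], of f] by (simp add: mad_def)
      then show ?thesis by (simp add: z_def right_diff_distrib algebra_simps)
    qed
    define c where "c = z 1"
    have yform: "y \<beta> g = dpow \<beta> g + c * g" for g
    proof -
      have "z g = c * g" unfolding c_def by (rule comm_is_mult[OF zadd zconst zcomm])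
      then show ?thesis by (simp add: z_def algebra_simps)
    qed
    have "c = 0"
    proof (rule ccontr)
      assume "c \<noteq> 0"
      then have "(y \<beta> ^^ CHAR('k)) 1 \<noteq> 0"
        using weight_nonzero[OF _ False yform] by blast
      moreover have "(y \<beta> ^^ CHAR('k)) 1 = 0"
        by (rule descent_power_zero[OF desc ch False])
      ultimately show False by simp
    qed
    then show ?thesis using yform by (simp add: fun_eq_iff)
  qed
qed

theorem theorem3p1:
  assumes "CHAR('k::field) > 0"
  shows "iter_descent (dpow :: ('n::finite \<Rightarrow>\<^sub>0 nat) \<Rightarrow> ('n, 'k) op)
     \<and> (\<forall>y :: ('n \<Rightarrow>\<^sub>0 nat) \<Rightarrow> ('n, 'k) op. iter_descent y \<longrightarrow> y = dpow)"
  using existence uniqueness[OF _ assms] by blast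


end
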